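(* Let $q$ be a power of the odd prime $p$ and let $f$ be a Dembowski–Ostrom polynomial over $\mathbb F_{q^2}$ such that $x\mapsto f(x)$ is a planar function on $\mathbb F_{q^2}$. Let $\kappa:\mathbb F_{q^2}\to\mathbb F_{q^2}$, $x\mapsto\bar x$, be an additive map with $\kappa(\kappa(x))=x$, $\overline{f(x)}=f(\bar x)$ and $\#\{y:y+\bar y=f(x+\bar x)\}=q$ for all $x\in\mathbb F_{q^2}$, and let $\mathcal U:=\{(x,y):y+\bar y=f(x+\bar x)\}\cup\{(\infty)\}$ be the corresponding unital of $\Pi(f)$. Let $\theta\in\mathbb F_{q^2}^*$ be such that for every $c\in\mathbb F_q$, $\#\{x\in\mathbb F_{q^2}:\theta_1f_0(x)-\theta_0f_1(x)=c\}$ equals $q+1$ if $c\neq0$ and $1$ if $c=0$, and let $\mathcal U_\theta:=\{(x,t\theta):x\in\mathbb F_{q^2},t\in\mathbb F_q\}\cup\{(\infty)\}$. Then $\mathcal U$ and $\mathcal U_\theta$ are not equivalent, i.e.\ no collineation of $\Pi(f)$ maps $\mathcal U_\theta$ onto $\mathcal U$.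
   Context: A Dembowski–Ostrom polynomial over $\mathbb F_{q^2}$ is one of the form $f(x)=\sum_{i,j}a_{ij}x^{p^i+p^j}$ with $a_{ij}\in\mathbb F_{q^2}$. A function $f$ on $\mathbb F_{q^2}$ is planar if $x\mapsto f(x+a)-f(x)$ is a bijection for every $a\neq0$. For planar $f$, $\Pi(f)$ is the projective plane with points $(x,y)\in\mathbb F_{q^2}^2$ and $(a)$ for $a\in\mathbb F_{q^2}\cup\{\infty\}$, lines $L_{a,b}=\{(x,f(x+a)-b):x\in\mathbb F_{q^2}\}\cup\{(a)\}$, $N_a=\{(a,y):y\in\mathbb F_{q^2}\}\cup\{(\infty)\}$ ($a,b\in\mathbb F_{q^2}$), $L_\infty=\{(a):a\in\mathbb F_{q^2}\cup\{\infty\}\}$; a collineation is a bijection of points mapping lines onto lines. A fixed $\xi\in\mathbb F_{q^2}\setminus\mathbb F_q$ is chosen; $\theta=\theta_0+\theta_1\xi$ and $f(x)=f_0(x)+f_1(x)\xi$ with components in $\mathbb F_q$. *)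

theory Defs
  imports Main "HOL-Computational_Algebra.Primes"
begin

text \<open>Points of the projective plane Pi(f): affine points (x,y) and points
  at infinity (a), a in F_{q^2} or infinity (None = infinity).\<close>
datatype 'a ppoint = Aff 'a 'a | Inf "'a option"

definition subfield_q :: "nat \<Rightarrow> ('a::field) set" where
  "subfield_q q = {x. x ^ q = x}"

definition DO_poly :: "nat \<Rightarrow> ('a::field \<Rightarrow> 'a) \<Rightarrow> bool" where
  "DO_poly p f \<longleftrightarrow> (\<exists>(a::nat \<Rightarrow> nat \<Rightarrow> 'a) N.
      \<forall>x. f x = (\<Sum>i<N. \<Sum>j<N. a i j * x ^ (p ^ i + p ^ j)))"

definition planar :: "('a::field \<Rightarrow> 'a) \<Rightarrow> bool" where
  "planar f \<longleftrightarrow> (\<forall>a. a \<noteq> 0 \<longrightarrow> bij (\<lambda>x. f (x + a) - f x))"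

definition line_L :: "('a::field \<Rightarrow> 'a) \<Rightarrow> 'a \<Rightarrow> 'a \<Rightarrow> 'a ppoint set" where
  "line_L f a b = {Aff x (f (x + a) - b) | x. True} \<union> {Inf (Some a)}"

definition line_N :: "'a \<Rightarrow> 'a ppoint set" where
  "line_N a = {Aff a y | y. True} \<union> {Inf None}"

definition line_inf :: "'a ppoint set" where
  "line_inf = range Inf"

definition plane_lines :: "('a::field \<Rightarrow> 'a) \<Rightarrow> 'a ppoint set set" where
  "plane_lines f = {line_L f a b | a b. True} \<union> {line_N a | a. True} \<union> {line_inf}"

definition collineation :: "('a::field \<Rightarrow> 'a) \<Rightarrow> ('a ppoint \<Rightarrow> 'a ppoint) \<Rightarrow> bool" where
  "collineation f \<phi> \<longleftrightarrow> bij \<phi> \<and> (\<lambda>L. \<phi> ` L) ` plane_lines f = plane_lines f"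

definition unital_U :: "('a::field \<Rightarrow> 'a) \<Rightarrow> ('a \<Rightarrow> 'a) \<Rightarrow> 'a ppoint set" where
  "unital_U f \<kappa> = {Aff x y | x y. y + \<kappa> y = f (x + \<kappa> x)} \<union> {Inf None}"

definition unital_U_theta :: "nat \<Rightarrow> 'a::field \<Rightarrow> 'a ppoint set" where
  "unital_U_theta q \<theta> = {Aff x (t * \<theta>) | x t. t \<in> subfield_q q} \<union> {Inf None}"

end

theory Submission
  imports Defs
begin


locale ctx =
  fixes f \<kappa> f0 f1 :: "'a::{field,finite} \<Rightarrow> 'a"
    and p q k :: nat and \<xi> \<theta> \<theta>0 \<theta>1 :: 'a
  assumes p_prime: "prime p" and p_odd: "odd p"
    and char_p: "of_nat p = (0::'a)"
    and q_def: "q = p ^ k" and k_pos: "k \<ge> 1"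
    and card: "card (UNIV :: 'a set) = q ^ 2"
    and DO: "DO_poly p f"
    and planar: "planar f"
    and kappa_add: "\<And>x y. \<kappa> (x + y) = \<kappa> x + \<kappa> y"
    and kappa_inv: "\<And>x. \<kappa> (\<kappa> x) = x"
    and kappa_f: "\<And>x. \<kappa> (f x) = f (\<kappa> x)"
    and kappa_card: "\<And>x. card {y. y + \<kappa> y = f (x + \<kappa> x)} = q"
    and xi: "\<xi> \<notin> subfield_q q"
    and f_comp: "\<And>x. f0 x \<in> subfield_q q \<and> f1 x \<in> subfield_q q \<and> f x = f0 x + f1 x * \<xi>"
    and theta_nz: "\<theta> \<noteq> 0"
    and theta_comp: "\<theta>0 \<in> subfield_q q" "\<theta>1 \<in> subfield_q q" "\<theta> = \<theta>0 + \<theta>1 * \<xi>"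
    and theta_cond: "\<And>c. c \<in> subfield_q q \<Longrightarrow>
        card {x. \<theta>1 * f0 x - \<theta>0 * f1 x = c} = (if c \<noteq> 0 then q + 1 else 1)"
begin

lemma CHAR_p: "CHAR('a) = p"
proof -
  have "CHAR('a) dvd p" using char_p of_nat_eq_0_iff_char_dvd by blast
  then have "CHAR('a) = 1 \<or> CHAR('a) = p" using p_prime prime_nat_iff by blast
  then show ?thesis by auto
qed

lemma frob: "(x + y :: 'a) ^ (p ^ i) = x ^ (p ^ i) + y ^ (p ^ i)"
  by (rule freshmans_dream'[where n = i]) (auto simp: CHAR_p p_prime)

lemma p_ge3: "p \<ge> 3"
proof -
  have "p \<ge> 2" using p_prime prime_ge_2_nat by blast
  moreover have "p \<noteq> 2" using p_odd by auto
  ultimately show ?thesis by auto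
qed

lemma q_ge3: "q \<ge> 3"
proof -
  have "p ^ 1 \<le> p ^ k" using k_pos p_ge3 by (intro power_increasing) auto
  then show ?thesis using p_ge3 q_def by auto
qed

lemma q_odd: "odd q" using q_def p_odd by simp

lemma two_nz: "(2::'a) \<noteq> 0"
proof
  assume "(2::'a) = 0"
  then have "of_nat 2 = (0::'a)" by simp
  then have "p dvd 2" using of_nat_eq_0_iff_char_dvd CHAR_p by metis
  then show False using p_ge3 by (auto dest: dvd_imp_le)
qed

definition Fq where "Fq = subfield_q q"

lemma Fq_iff: "(x::'a) \<in> subfield_q q \<longleftrightarrow> x ^ q = x" by (simp add: subfield_q_def)

lemma Fq_add: "(x::'a) \<in> subfield_q q \<Longrightarrow> y \<in> subfield_q q \<Longrightarrow> x + y \<in> subfield_q q"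
  unfolding subfield_q_def q_def using frob[of x y k] by simp
lemma Fq_uminus: "(x::'a) \<in> subfield_q q \<Longrightarrow> - x \<in> subfield_q q"
  using q_odd by (simp add: Fq_iff)
lemma Fq_diff: "(x::'a) \<in> subfield_q q \<Longrightarrow> y \<in> subfield_q q \<Longrightarrow> x - y \<in> subfield_q q"
  using Fq_add[of x "-y"] Fq_uminus[of y] by simp
lemma Fq_mult: "(x::'a) \<in> subfield_q q \<Longrightarrow> y \<in> subfield_q q \<Longrightarrow> x * y \<in> subfield_q q"
  by (simp add: Fq_iff power_mult_distrib)
lemma Fq_div: "(x::'a) \<in> subfield_q q \<Longrightarrow> y \<in> subfield_q q \<Longrightarrow> x / y \<in> subfield_q q"
  by (simp add: Fq_iff power_divide)
lemma Fq_0: "(0::'a) \<in> subfield_q q" using q_ge3 by (simp add: Fq_iff)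

lemma indep: assumes "(a::'a) \<in> subfield_q q" "b \<in> subfield_q q" "c \<in> subfield_q q" "d \<in> subfield_q q"
  and "a + b * \<xi> = c + d * \<xi>" shows "a = c \<and> b = d"
proof (cases "b = d")
  case True then show ?thesis using assms by simp
next
  case False
  then have "\<xi> = (c - a) / (b - d)" using assms(5)
    by (simp add: field_simps)
  then have "\<xi> \<in> subfield_q q" using assms by (simp add: Fq_div Fq_diff)
  then show ?thesis using xi by simp
qed

end


context ctx begin

definition B where "B x y = f (x + y) - f x - f y"

lemma DO_obtain: obtains a N where "\<And>x. f x = (\<Sum>i<N. \<Sum>j<N. a i j * (x ^ (p ^ i) * x ^ (p ^ j)))"
proof -
  from DO obtain a N where h: "\<And>x. f x = (\<Sum>i<N. \<Sum>j<N. a i j * x ^ (p ^ i + p ^ j))"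
    unfolding DO_poly_def by blast
  show ?thesis using that[of a N] h by (simp add: power_add)
qed

lemma B_formula: obtains a N where
  "\<And>x y. B x y = (\<Sum>i<N. \<Sum>j<N. a i j * (x ^ (p ^ i) * y ^ (p ^ j) + y ^ (p ^ i) * x ^ (p ^ j)))"
proof -
  obtain a N where aN: "\<And>x. f x = (\<Sum>i<N. \<Sum>j<N. a i j * (x ^ (p ^ i) * x ^ (p ^ j)))"
    using DO_obtain by blast
  have "B x y = (\<Sum>i<N. \<Sum>j<N. a i j * (x ^ (p ^ i) * y ^ (p ^ j) + y ^ (p ^ i) * x ^ (p ^ j)))" for x y
  proof -
    have "f (x + y) = (\<Sum>i<N. \<Sum>j<N. a i j * (x ^ (p ^ i) * x ^ (p ^ j)) +
        a i j * (x ^ (p ^ i) * y ^ (p ^ j) + y ^ (p ^ i) * x ^ (p ^ j)) + a i j * (y ^ (p ^ i) * y ^ (p ^ j)))"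
    proof -
      have expand: "\<And>X Y X' Y' (c::'a). c * ((X + Y) * (X' + Y')) = c * (X * X') + c * (X * Y' + Y * X') + c * (Y * Y')"
        by (simp add: algebra_simps)
      show ?thesis
        apply (subst aN)
        apply (subst frob)+
        apply (simp only: expand)
        done
    qed
    then have "f (x + y) = f x + (\<Sum>i<N. \<Sum>j<N. a i j * (x ^ (p ^ i) * y ^ (p ^ j) + y ^ (p ^ i) * x ^ (p ^ j))) + f y"
      by (simp only: aN sum.distrib)
    then show ?thesis unfolding B_def by simp
  qed
  then show ?thesis using that by blast
qed

lemma f_0[simp]: "f 0 = 0"
proof -
  obtain a N where aN: "\<And>x. f x = (\<Sum>i<N. \<Sum>j<N. a i j * (x ^ (p ^ i) * x ^ (p ^ j)))"
    using DO_obtain by blast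
  have "p ^ i \<noteq> 0" for i using p_ge3 by simp
  then have h: "(0::'a) ^ (p ^ i) = 0" for i by (simp add: zero_power)
  show ?thesis unfolding aN h by simp
qed

lemma f_even: "f (- x) = f x"
proof -
  obtain a N where aN: "\<And>x. f x = (\<Sum>i<N. \<Sum>j<N. a i j * (x ^ (p ^ i) * x ^ (p ^ j)))"
    using DO_obtain by blast
  have "odd (p ^ i)" for i using p_odd by simp
  then show ?thesis unfolding aN by simp
qed

lemma B_add_left: "B (x + y) z = B x z + B y z"
proof -
  obtain a N where aN: "\<And>x y. B x y = (\<Sum>i<N. \<Sum>j<N. a i j * (x ^ (p ^ i) * y ^ (p ^ j) + y ^ (p ^ i) * x ^ (p ^ j)))"
    using B_formula by blast
  have expand2: "\<And>X Y Z W X' Y' (c::'a). c * ((X + Y) * Z + W * (X' + Y')) = c * (X * Z + W * X') + c * (Y * Z + W * Y')"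
    by (simp add: algebra_simps)
  have "B x z + B y z = (\<Sum>i<N. \<Sum>j<N. a i j * (x ^ (p ^ i) * z ^ (p ^ j) + z ^ (p ^ i) * x ^ (p ^ j))
     + a i j * (y ^ (p ^ i) * z ^ (p ^ j) + z ^ (p ^ i) * y ^ (p ^ j)))"
    unfolding aN by (simp only: sum.distrib)
  also have "\<dots> = B (x + y) z"
    apply (subst aN)
    apply (subst frob)+
    apply (simp only: expand2)
    done
  finally show ?thesis by simp
qed

lemma B_sym: "B x y = B y x" unfolding B_def by (simp add: add.commute)
lemma B_add_right: "B z (x + y) = B z x + B z y"
proof -
  have "B z (x + y) = B (x + y) z" by (rule B_sym)
  also have "\<dots> = B x z + B y z" by (rule B_add_left)
  also have "\<dots> = B z x + B z y" using B_sym[of x z] B_sym[of y z] by simp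
  finally show ?thesis .
qed
lemma B_0_left[simp]: "B 0 y = 0" unfolding B_def by simp
lemma B_0_right[simp]: "B y 0 = 0" using B_sym[of y 0] by simp
lemma B_minus_left: "B (- x) y = - B x y" using B_add_left[of x "-x" y] by (simp add: eq_neg_iff_add_eq_0 add.commute)
lemma B_minus_right: "B y (- x) = - B y x" using B_minus_left[of x y] B_sym[of y "-x"] B_sym[of y x] by simp
lemma B_diff_left: "B (x - y) z = B x z - B y z" using B_add_left[of x "-y" z] B_minus_left by simp
lemma B_diff_right: "B z (x - y) = B z x - B z y" using B_diff_left[of x y z] B_sym[of z "x - y"] B_sym[of z x] B_sym[of z y] by simp
lemma B_two_left: "B (2 * x) y = 2 * B x y" unfolding mult_2 by (rule B_add_left)
lemma B_two_right: "B y (2 * x) = 2 * B y x" using B_two_left[of x y] B_sym[of y "2 * x"] B_sym[of y x] by simp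

lemma f_expand: "f (x + y) = f x + f y + B x y" unfolding B_def by simp

lemma kappa_0[simp]: "\<kappa> 0 = 0" using kappa_add[of 0 0] by (metis add.right_neutral add_left_cancel)
lemma kappa_minus: "\<kappa> (- x) = - \<kappa> x" using kappa_add[of x "-x"] by (simp add: eq_neg_iff_add_eq_0 add.commute)
lemma kappa_diff: "\<kappa> (x - y) = \<kappa> x - \<kappa> y" using kappa_add[of x "-y"] kappa_minus by simp
lemma kappa_two: "\<kappa> (2 * x) = 2 * \<kappa> x" unfolding mult_2 by (rule kappa_add)
lemma kappa_B: "\<kappa> (B x y) = B (\<kappa> x) (\<kappa> y)" unfolding B_def by (simp add: kappa_diff kappa_f kappa_add)

end



definition feet :: "'a ppoint set set \<Rightarrow> 'a ppoint set \<Rightarrow> 'a ppoint \<Rightarrow> 'a ppoint set" where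
  "feet Ls S P = {Q. \<exists>m\<in>Ls. P \<in> m \<and> m \<inter> S = {Q}}"

lemma mem_L[simp]: "Aff x y \<in> line_L f a b \<longleftrightarrow> y = f (x + a) - b" "Inf s \<in> line_L f a b \<longleftrightarrow> s = Some a"
  by (auto simp: line_L_def)
lemma mem_N[simp]: "Aff x y \<in> line_N a \<longleftrightarrow> x = a" "Inf s \<in> line_N a \<longleftrightarrow> s = None"
  by (auto simp: line_N_def)
lemma mem_inf[simp]: "Aff x y \<notin> line_inf" "Inf s \<in> line_inf"
  by (auto simp: line_inf_def)
lemma mem_U[simp]: "Aff x y \<in> unital_U f \<kappa> \<longleftrightarrow> y + \<kappa> y = f (x + \<kappa> x)" "Inf s \<in> unital_U f \<kappa> \<longleftrightarrow> s = None"
  by (auto simp: unital_U_def)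
lemma mem_Ut[simp]: "Aff x y \<in> unital_U_theta q \<theta> \<longleftrightarrow> (\<exists>t \<in> subfield_q q. y = t * \<theta>)" "Inf s \<in> unital_U_theta q \<theta> \<longleftrightarrow> s = None"
  by (auto simp: unital_U_theta_def)

lemma lines_cases: "m \<in> plane_lines f \<Longrightarrow> (\<And>a b. m = line_L f a b \<Longrightarrow> P) \<Longrightarrow> (\<And>a. m = line_N a \<Longrightarrow> P) \<Longrightarrow> (m = line_inf \<Longrightarrow> P) \<Longrightarrow> P"
  by (auto simp: plane_lines_def)

context ctx begin

lemma planar_c: assumes "f (c - x) = f (c + x)" "x \<noteq> 0" shows "c = 0"
proof -
  have "2 * x \<noteq> 0" using assms(2) two_nz by simp
  then have "inj (\<lambda>y. f (y + 2 * x) - f y)" using planar unfolding planar_def bij_def by blast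
  moreover have "f (c - x + 2 * x) - f (c - x) = 0" using assms(1) by (simp add: algebra_simps)
  moreover have "f (- c - x + 2 * x) - f (- c - x) = 0"
  proof -
    have "- c - x + 2 * x = - (c - x)" by (simp add: algebra_simps)
    then have "f (- c - x + 2 * x) = f (c - x)" using f_even by metis
    moreover have "- c - x = - (c + x)" by (simp add: algebra_simps)
    then have "f (- c - x) = f (c + x)" using f_even by metis
    ultimately show ?thesis using assms(1) by simp
  qed
  ultimately have "c - x = - c - x" by (metis (mono_tags, lifting) injD)
  then have "2 * c = 0" by (simp add: algebra_simps)
  then show ?thesis using two_nz by simp
qed

lemma f_eq: assumes "f x = f y" shows "x = y \<or> x = - y"
proof -
  define t where "t = (x - y) / 2"
  define c where "c = y + t"
  have "2 * t = x - y" using two_nz by (simp add: t_def)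
  then have tt: "t + t = x - y" by (simp add: algebra_simps)
  have x: "x = c + t" using tt by (simp add: c_def algebra_simps)
  have y: "y = c - t" by (simp add: c_def)
  show ?thesis
  proof (cases "t = 0")
    case True then show ?thesis using x y by simp
  next
    case False
    then have "c = 0" using planar_c[of c t] assms x y by simp
    then show ?thesis using x y by simp
  qed
qed

definition D where "D a x = f (x + a) + \<kappa> (f (x + a)) - f (x + \<kappa> x)"

lemma D_expand: "D a x = f a + f (\<kappa> a) + B x a + B (\<kappa> x) (\<kappa> a) - B x (\<kappa> x)"
  unfolding D_def f_expand kappa_add kappa_f kappa_B by (simp add: algebra_simps)

lemma D_sym: "D a (2 * \<kappa> a - x) = D a x"
  unfolding D_expand kappa_diff kappa_two kappa_inv B_diff_left B_diff_right B_two_left B_two_right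
  using B_sym[of a "\<kappa> a"] B_sym[of "\<kappa> x" "\<kappa> a"] by (simp add: algebra_simps)

end


context ctx begin

lemma U_col: "feet (plane_lines f) (unital_U f \<kappa>) (Aff u v) \<subseteq> line_L f (\<kappa> u) (\<kappa> v)"
proof
  fix Q assume "Q \<in> feet (plane_lines f) (unital_U f \<kappa>) (Aff u v)"
  then obtain m where m: "m \<in> plane_lines f" "Aff u v \<in> m" "m \<inter> unital_U f \<kappa> = {Q}"
    unfolding feet_def by blast
  show "Q \<in> line_L f (\<kappa> u) (\<kappa> v)"
  proof (rule lines_cases[OF m(1)])
    show "m = line_inf \<Longrightarrow> ?thesis" using m(2) by simp
  next
    fix a assume ma: "m = line_N a"
    then have "a = u" using m(2) by simp
    have "card {y. y + \<kappa> y = f (u + \<kappa> u)} \<noteq> 0" using kappa_card q_ge3 by simp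
    then obtain y0 where y0: "y0 + \<kappa> y0 = f (u + \<kappa> u)" by (metis (mono_tags, lifting) Collect_empty_eq card.empty)
    have "Inf None \<in> m \<inter> unital_U f \<kappa>" "Aff u y0 \<in> m \<inter> unital_U f \<kappa>" using ma \<open>a = u\<close> y0 by auto
    then show ?thesis using m(3) by auto
  next
    fix a b assume mab: "m = line_L f a b"
    then have v: "v = f (u + a) - b" using m(2) by simp
    have "Q \<in> m \<inter> unital_U f \<kappa>" using m(3) by auto
    then obtain x y where Q: "Q = Aff x y" using mab by (cases Q) auto
    have y: "y = f (x + a) - b" and yU: "y + \<kappa> y = f (x + \<kappa> x)"
      using \<open>Q \<in> m \<inter> unital_U f \<kappa>\<close> Q mab by auto
    have fxa: "f (x + a) = y + b" using y by simp
    have Dx: "D a x = b + \<kappa> b" unfolding D_def fxa kappa_add using yU by (simp add: algebra_simps)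
    define x' where "x' = 2 * \<kappa> a - x"
    have "D a x' = b + \<kappa> b" using Dx D_sym unfolding x'_def by simp
    then have "f (x' + a) - b + \<kappa> (f (x' + a) - b) = f (x' + \<kappa> x')"
      unfolding D_def kappa_diff by (simp add: algebra_simps)
    then have "Aff x' (f (x' + a) - b) \<in> m \<inter> unital_U f \<kappa>"
      using mab by simp
    then have "x' = x" using m(3) Q by auto
    then have "\<kappa> a = x" unfolding x'_def using two_nz by (simp add: algebra_simps)
    then have xa: "x = \<kappa> a" by simp
    have "\<kappa> (f (\<kappa> a + a)) = f (a + \<kappa> a)" by (simp add: kappa_f kappa_add kappa_inv)
    then have "f (a + \<kappa> a) = b + \<kappa> b" using yU y xa by (simp add: kappa_diff kappa_inv algebra_simps)
    then have "y = \<kappa> b" using y xa by (simp add: add.commute)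
    moreover have "f (x + \<kappa> u) - \<kappa> v = \<kappa> b"
      using xa v by (simp add: kappa_diff kappa_f kappa_add add.commute)
    ultimately show ?thesis using Q by simp
  qed
qed

end


context ctx begin

definition g where "g x = \<theta>1 * f0 x - \<theta>0 * f1 x"

lemma g_Fq: "g x \<in> subfield_q q"
proof -
  have "f0 x \<in> subfield_q q" "f1 x \<in> subfield_q q" using f_comp by auto
  then show ?thesis unfolding g_def using theta_comp by (intro Fq_diff Fq_mult)
qed

lemma comp_unique: assumes "f x = a + b * \<xi>" "a \<in> subfield_q q" "b \<in> subfield_q q"
  shows "f0 x = a \<and> f1 x = b"
proof -
  have h: "f0 x \<in> subfield_q q" "f1 x \<in> subfield_q q" "f x = f0 x + f1 x * \<xi>" using f_comp by auto
  show ?thesis using indep[OF h(1) h(2) assms(2) assms(3)] h(3) assms(1) by simp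
qed

lemma g_0: "g 0 = 0"
proof -
  have "f 0 = 0 + 0 * \<xi>" by simp
  then have "f0 0 = 0 \<and> f1 0 = 0" using comp_unique[of 0 0 0] Fq_0 by blast
  then show ?thesis by (simp add: g_def)
qed

lemma g_zero: assumes "g x = 0" shows "x = 0"
proof -
  have "card {x. g x = 0} = 1" using theta_cond[OF Fq_0] unfolding g_def by simp
  then obtain z where "{x. g x = 0} = {z}" using card_1_singletonE by blast
  then have "x = z" "0 = z" using g_0 assms by (blast, blast)
  then show ?thesis by simp
qed

lemma g_even: "g (- x) = g x"
proof -
  have "f (- x) = f0 x + f1 x * \<xi>" using f_even f_comp by simp
  moreover have "f0 x \<in> subfield_q q" "f1 x \<in> subfield_q q" using f_comp by auto
  ultimately have "f0 (- x) = f0 x \<and> f1 (- x) = f1 x" using comp_unique[of "-x" "f0 x" "f1 x"] by blast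
  then show ?thesis by (simp add: g_def)
qed

lemma inFqtheta: assumes "f z = t * \<theta>" "t \<in> subfield_q q" shows "z = 0"
proof -
  have "f z = t * \<theta>0 + (t * \<theta>1) * \<xi>" using assms theta_comp by (simp add: algebra_simps)
  then have "f0 z = t * \<theta>0 \<and> f1 z = t * \<theta>1"
    using comp_unique Fq_mult assms(2) theta_comp by blast
  then have "g z = 0" by (simp add: g_def)
  then show ?thesis by (rule g_zero)
qed

lemma diff_in: assumes "g x = g w" shows "\<exists>s\<in>subfield_q q. f x - f w = s * \<theta>"
proof -
  define \<alpha> where "\<alpha> = f0 x - f0 w"
  define \<beta> where "\<beta> = f1 x - f1 w"
  have ab: "\<alpha> \<in> subfield_q q" "\<beta> \<in> subfield_q q" unfolding \<alpha>_def \<beta>_def using f_comp Fq_diff by auto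
  have fd: "f x - f w = \<alpha> + \<beta> * \<xi>" unfolding \<alpha>_def \<beta>_def using f_comp[of x] f_comp[of w] by (simp add: algebra_simps)
  have rel: "\<theta>1 * \<alpha> = \<theta>0 * \<beta>" using assms unfolding g_def \<alpha>_def \<beta>_def by (simp add: algebra_simps)
  show ?thesis
  proof (cases "\<theta>1 = 0")
    case True
    then have "\<theta>0 \<noteq> 0" using theta_nz theta_comp by auto
    then have "\<beta> = 0" using rel True by simp
    show ?thesis
    proof (rule bexI[of _ "\<alpha> / \<theta>0"])
      show "\<alpha> / \<theta>0 \<in> subfield_q q" using Fq_div[OF ab(1) theta_comp(1)] .
      show "f x - f w = \<alpha> / \<theta>0 * \<theta>" using fd \<open>\<beta> = 0\<close> True \<open>\<theta>0 \<noteq> 0\<close> theta_comp(3) by simp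
    qed
  next
    case False
    have "\<beta> / \<theta>1 * \<theta> = \<alpha> + \<beta> * \<xi>" using False rel theta_comp(3)
      by (simp add: field_simps)
    moreover have "\<beta> / \<theta>1 \<in> subfield_q q" using Fq_div[OF ab(2) theta_comp(2)] .
    ultimately show ?thesis using fd by metis
  qed
qed

lemma card_D: assumes "w \<noteq> 0" shows "card {x. g x = g w} = q + 1"
proof -
  have "g w \<noteq> 0" using g_zero assms by blast
  then show ?thesis using theta_cond[OF g_Fq[of w]] unfolding g_def by simp
qed

lemma foot_Ut: assumes "g x = g w"
  shows "Aff (u - x) (f w - f x) \<in> feet (plane_lines f) (unital_U_theta q \<theta>) (Aff u (f w))"
proof -
  obtain s where s: "s \<in> subfield_q q" "f x - f w = s * \<theta>" using diff_in assms by blast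
  define m where "m = line_L f (x - u) (f x - f w)"
  have "m \<in> plane_lines f" unfolding m_def plane_lines_def by blast
  moreover have "Aff u (f w) \<in> m" unfolding m_def by simp
  moreover have "m \<inter> unital_U_theta q \<theta> = {Aff (u - x) (f w - f x)}"
  proof (intro equalityI subsetI)
    fix P assume P: "P \<in> m \<inter> unital_U_theta q \<theta>"
    show "P \<in> {Aff (u - x) (f w - f x)}"
    proof (cases P)
      case (Aff y z)
      then have z: "z = f (y + (x - u)) - (f x - f w)" using P m_def by simp
      obtain t where t: "t \<in> subfield_q q" "z = t * \<theta>" using P Aff by auto
      have "f (y + (x - u)) = (t + s) * \<theta>" using z t s by (simp add: algebra_simps)
      then have "y + (x - u) = 0" using inFqtheta Fq_add t s by blast
      then have "y = u - x" by (simp add: algebra_simps)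
      then show ?thesis using Aff z by simp
    next
      case (Inf oo) then show ?thesis using P m_def by auto
    qed
  next
    fix P assume "P \<in> {Aff (u - x) (f w - f x)}"
    then have P: "P = Aff (u - x) (f w - f x)" by simp
    have "f w - f x = (- s) * \<theta>" using s by (simp add: algebra_simps)
    then have "\<exists>t\<in>subfield_q q. f w - f x = t * \<theta>" using Fq_uminus[OF s(1)] by blast
    then show "P \<in> m \<inter> unital_U_theta q \<theta>" using P unfolding m_def by simp
  qed
  ultimately show ?thesis unfolding feet_def by blast
qed

lemma Ut_noncol: assumes "w \<noteq> 0" "LL \<in> plane_lines f"
  shows "\<not> feet (plane_lines f) (unital_U_theta q \<theta>) (Aff u (f w)) \<subseteq> LL"
proof
  assume sub: "feet (plane_lines f) (unital_U_theta q \<theta>) (Aff u (f w)) \<subseteq> LL"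
  have inl: "Aff (u - x) (f w - f x) \<in> LL" if "g x = g w" for x by (rule subsetD[OF sub foot_Ut[OF that]])
  have w1: "Aff (u - w) 0 \<in> LL" using inl[of w] by simp
  have w2: "Aff (u + w) 0 \<in> LL" using inl[of "-w"] g_even f_even by simp
  show False
  proof (rule lines_cases[OF assms(2)])
    show "LL = line_inf \<Longrightarrow> False" using w1 by simp
  next
    fix c assume "LL = line_N c"
    then have "u - w = u + w" using w1 w2 by simp
    then have "2 * w = 0" by (simp add: algebra_simps)
    then show False using two_nz assms(1) by simp
  next
    fix a b assume lab: "LL = line_L f a b"
    have eq: "f w - f x = f (u - x + a) - b" if "g x = g w" for x using inl[OF that] lab by simp
    have ua: "u + a = 0"
    proof -
      have "f w - f w = f (u - w + a) - b" using eq[of w] by simp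
      moreover have "f w - f w = f (u + w + a) - b" using eq[of "-w"] g_even f_even by simp
      ultimately have "f ((u + a) - w) = f ((u + a) + w)" by (simp add: algebra_simps)
      then show ?thesis using planar_c[of "u + a" w] assms(1) by simp
    qed
    have sub2: "{x. g x = g w} \<subseteq> {w, - w}"
    proof
      fix x assume "x \<in> {x. g x = g w}"
      then have "f w - f x = f (u - x + a) - b" using eq by simp
      moreover have "f (u - x + a) = f x"
      proof -
        have "u - x + a = - x" using ua by (simp add: algebra_simps)
        then show ?thesis using f_even[of x] by metis
      qed
      moreover have h3: "f w - f w = f (u - w + a) - b" using eq[of w] by simp
      moreover have h4: "f (u - w + a) = f w"
      proof -
        have "u - w + a = - w" using ua by (simp add: algebra_simps)
        then show ?thesis using f_even[of w] by metis
      qed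
      ultimately have e1: "f w - f x = f x - b" by metis
      from h3 h4 have "b = f w" by simp
      with e1 have "f w - f x = f x - f w" by simp
      then have "f x = f w" using two_nz by (simp add: algebra_simps)
      then show "x \<in> {w, - w}" using f_eq[of x w] by simp
    qed
    have "card {x. g x = g w} \<le> card {w, - w}" by (rule card_mono[OF _ sub2]) simp
    also have "\<dots> \<le> 2" by (rule order_trans[OF card_insert_le_m1]) auto
    finally show False using card_D[OF assms(1)] q_ge3 by simp
  qed
qed

lemma Ut_notin: assumes "w \<noteq> 0" shows "Aff u (f w) \<notin> unital_U_theta q \<theta>"
  using inFqtheta assms by auto

end



lemma col_transfer:
  assumes col: "collineation f \<phi>" and img: "\<phi> ` S = S'"
    and ex: "\<exists>l'\<in>plane_lines f. feet (plane_lines f) S' (\<phi> P) \<subseteq> l'"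
  shows "\<exists>l\<in>plane_lines f. feet (plane_lines f) S P \<subseteq> l"
proof -
  have inj: "inj \<phi>" using col unfolding collineation_def bij_def by blast
  have imL: "(\<lambda>L. \<phi> ` L) ` plane_lines f = plane_lines f" using col unfolding collineation_def by blast
  obtain l' where l': "l' \<in> plane_lines f" "feet (plane_lines f) S' (\<phi> P) \<subseteq> l'" using ex by blast
  then obtain l where l: "l \<in> plane_lines f" "l' = \<phi> ` l" using imL by (metis imageE)
  have "feet (plane_lines f) S P \<subseteq> l"
  proof
    fix Q assume "Q \<in> feet (plane_lines f) S P"
    then obtain m where m: "m \<in> plane_lines f" "P \<in> m" "m \<inter> S = {Q}" unfolding feet_def by blast
    have "\<phi> ` m \<in> plane_lines f" using m(1) imL by blast
    moreover have "\<phi> P \<in> \<phi> ` m" using m(2) by blast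
    moreover have "\<phi> ` m \<inter> S' = {\<phi> Q}"
    proof -
      have "\<phi> ` m \<inter> S' = \<phi> ` (m \<inter> S)" using img inj by (auto simp: image_Int)
      then show ?thesis using m(3) by simp
    qed
    ultimately have "\<phi> Q \<in> feet (plane_lines f) S' (\<phi> P)" unfolding feet_def by blast
    then have "\<phi> Q \<in> \<phi> ` l" using l' l by blast
    then show "Q \<in> l" using inj by (simp add: inj_image_mem_iff)
  qed
  then show ?thesis using l by blast
qed

lemma card_option_le: "card (UNIV :: ('a::finite) option set) \<le> Suc (card (UNIV :: 'a set))"
proof -
  have "(UNIV :: 'a option set) = insert None (range Some)" by (auto intro: option.exhaust)
  then have "card (UNIV :: 'a option set) = card (insert None (range (Some :: 'a \<Rightarrow> _)))" by simp
  also have "\<dots> \<le> Suc (card (range (Some :: 'a \<Rightarrow> _)))" by (rule card_insert_le_m1) auto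
  also have "card (range (Some :: 'a \<Rightarrow> _)) \<le> card (UNIV :: 'a set)" by (rule card_image_le) simp
  finally show ?thesis by simp
qed

lemma card_range_Inf: "card (range (Inf :: 'a option \<Rightarrow> 'a ppoint)) \<le> Suc (card (UNIV :: ('a::finite) set))"
proof -
  have "card (range (Inf :: 'a option \<Rightarrow> 'a ppoint)) \<le> card (UNIV :: 'a option set)" by (rule card_image_le) simp
  then show ?thesis using card_option_le[where 'a='a] by linarith
qed

context ctx begin

lemma main: "\<not> (\<exists>\<phi>. collineation f \<phi> \<and> \<phi> ` unital_U_theta q \<theta> = unital_U f \<kappa>)"
proof
  assume "\<exists>\<phi>. collineation f \<phi> \<and> \<phi> ` unital_U_theta q \<theta> = unital_U f \<kappa>"
  then obtain \<phi> where col: "collineation f \<phi>" and img: "\<phi> ` unital_U_theta q \<theta> = unital_U f \<kappa>" by blast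
  have inj: "inj \<phi>" using col unfolding collineation_def bij_def by blast
  have "q * q \<ge> 3 * 3" using q_ge3 by (intro mult_mono) auto
  then have cardU: "card (UNIV :: 'a set) \<ge> 9" using card by (simp add: power2_eq_square)
  have "\<not> (UNIV :: 'a set) \<subseteq> {0, 1, -1}"
  proof
    assume "(UNIV :: 'a set) \<subseteq> {0, 1, -1}"
    then have "card (UNIV :: 'a set) \<le> card {0, 1, -1 :: 'a}" by (intro card_mono) auto
    also have "\<dots> \<le> 3" by (simp add: card_insert_le_m1 le_SucI)
    finally show False using cardU by simp
  qed
  then obtain w2 :: 'a where w2: "w2 \<noteq> 0" "w2 \<noteq> 1" "w2 \<noteq> -1" by blast
  have fne: "f 1 \<noteq> f w2"
  proof
    assume "f 1 = f w2"
    then have "1 = w2 \<or> 1 = - w2" using f_eq[of 1 w2] by simp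
    then show False using w2 by (metis minus_minus)
  qed
  define W where "W = {1, w2}"
  have W0: "w \<in> W \<Longrightarrow> w \<noteq> 0" for w using w2 by (auto simp: W_def)
  define A where "A = (\<lambda>(u, w). Aff u (f w)) ` (UNIV \<times> W)"
  have injA: "inj_on (\<lambda>(u, w). Aff u (f w)) (UNIV \<times> W)"
    by (rule inj_onI) (use fne in \<open>auto simp: W_def\<close>)
  have cardW: "card W = 2" using w2 by (simp add: W_def)
  have cardA: "card A = q ^ 2 * 2"
    unfolding A_def using card_image[OF injA] card cardW by (simp add: card_cartesian_product)
  have sub: "\<phi> ` A \<subseteq> range Inf"
  proof
    fix R assume "R \<in> \<phi> ` A"
    then obtain u w where R: "R = \<phi> (Aff u (f w))" and w: "w \<in> W" unfolding A_def by auto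
    have "Aff u (f w) \<notin> unital_U_theta q \<theta>" using Ut_notin W0[OF w] by blast
    show "R \<in> range Inf"
    proof (cases R)
      case (Aff u' v')
      have "line_L f (\<kappa> u') (\<kappa> v') \<in> plane_lines f" unfolding plane_lines_def by blast
      moreover have "feet (plane_lines f) (unital_U f \<kappa>) (\<phi> (Aff u (f w))) \<subseteq> line_L f (\<kappa> u') (\<kappa> v')"
        using U_col[of u' v'] Aff R by simp
      ultimately have "\<exists>l'\<in>plane_lines f. feet (plane_lines f) (unital_U f \<kappa>) (\<phi> (Aff u (f w))) \<subseteq> l'"
        by (rule bexI[rotated])
      then have "\<exists>l\<in>plane_lines f. feet (plane_lines f) (unital_U_theta q \<theta>) (Aff u (f w)) \<subseteq> l"
        by (rule col_transfer[OF col img])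
      then obtain l where "l \<in> plane_lines f" "feet (plane_lines f) (unital_U_theta q \<theta>) (Aff u (f w)) \<subseteq> l" by blast
      then show ?thesis using Ut_noncol[OF W0[OF w], of l u] by simp
    next
      case (Inf s) then show ?thesis by simp
    qed
  qed
  have "card A = card (\<phi> ` A)" using inj by (simp add: card_image inj_on_subset)
  also have "\<dots> \<le> card (range (Inf :: 'a option \<Rightarrow> 'a ppoint))" by (rule card_mono[OF _ sub]) simp
  also have "\<dots> \<le> Suc (q ^ 2)" using card_range_Inf[where 'a='a] card by simp
  finally have "q ^ 2 * 2 \<le> Suc (q ^ 2)" using cardA by simp
  moreover have "q ^ 2 \<ge> 9" using cardU card by simp
  ultimately show False by simp
qed

end


theorem theorem4p2:
  fixes f \<kappa> f0 f1 :: "'a::{field,finite} \<Rightarrow> 'a"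
    and p q k :: nat and \<xi> \<theta> \<theta>0 \<theta>1 :: 'a
  assumes p_prime: "prime p" and p_odd: "odd p"
    and char_p: "of_nat p = (0::'a)"
    and q_def: "q = p ^ k" and k_pos: "k \<ge> 1"
    and card: "card (UNIV :: 'a set) = q ^ 2"
    and DO: "DO_poly p f"
    and planar: "planar f"
    and kappa_add: "\<And>x y. \<kappa> (x + y) = \<kappa> x + \<kappa> y"
    and kappa_inv: "\<And>x. \<kappa> (\<kappa> x) = x"
    and kappa_f: "\<And>x. \<kappa> (f x) = f (\<kappa> x)"
    and kappa_card: "\<And>x. card {y. y + \<kappa> y = f (x + \<kappa> x)} = q"
    and xi: "\<xi> \<notin> subfield_q q"
    and f_comp: "\<And>x. f0 x \<in> subfield_q q \<and> f1 x \<in> subfield_q q \<and> f x = f0 x + f1 x * \<xi>"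
    and theta_nz: "\<theta> \<noteq> 0"
    and theta_comp: "\<theta>0 \<in> subfield_q q" "\<theta>1 \<in> subfield_q q" "\<theta> = \<theta>0 + \<theta>1 * \<xi>"
    and theta_cond: "\<And>c. c \<in> subfield_q q \<Longrightarrow>
        card {x. \<theta>1 * f0 x - \<theta>0 * f1 x = c} = (if c \<noteq> 0 then q + 1 else 1)"
  shows "\<not> (\<exists>\<phi>. collineation f \<phi> \<and> \<phi> ` unital_U_theta q \<theta> = unital_U f \<kappa>)"
proof -
  interpret ctx f \<kappa> f0 f1 p q k \<xi> \<theta> \<theta>0 \<theta>1
    by (rule ctx.intro) (fact assms)+
  show ?thesis by (rule main)
qed

end
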